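(* Let $G$ be a mixed graph without directed cycles with maxrank $\Lambda=\Lambda(G)$, and for $i=0,\dots,\Lambda$ let $L_i$ be the set of vertices of inrank $i$. Then $\chi(G)\le\sum_{i=0}^{\Lambda}\chi_{\mathrm u}(G[L_i])$, where $\chi_{\mathrm u}(G[L_i])$ is the chromatic number of the undirected graph $G[L_i]$ (which contains no arcs). Moreover, the bound is tight: for all integers $\ell,k\ge1$ there is a mixed graph $G$ with $\Lambda(G)=\ell$, $\chi_{\mathrm u}(G[L_i])=k$ for every $i\in\{0,\dots,\ell\}$, and $\chi(G)=(\ell+1)k$.
   Context: A mixed graph $G$ consists of a finite vertex set $V(G)$, a set $E(G)$ of undirected edges and a set $A(G)$ of directed arcs; it is simple and contains no directed cycle. A $k$-coloring $c\colon V(G)\to\{1,\dots,k\}$ is proper if $c(u)\neq c(v)$ for every edge $\{u,v\}$ and $c(u)<c(v)$ for every arc $(u,v)$; $\chi(G)$ is the minimum such $k$. The maxrank $\Lambda(G)$ is the number of arcs on a longest directed path in $G$; the inrank of a vertex $v$ is the number of arcs on a longest directed path ending at $v$. $G[L]$ is the mixed subgraph induced by $L$. *)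

theory Defs
  imports Main
begin

definition mixed_graph :: "'a set \<Rightarrow> 'a set set \<Rightarrow> ('a \<times> 'a) set \<Rightarrow> bool" where
  "mixed_graph V E A \<longleftrightarrow>
     finite V \<and> (\<forall>e\<in>E. e \<subseteq> V \<and> card e = 2) \<and> A \<subseteq> V \<times> V \<and>
     (\<forall>(u,v)\<in>A. u \<noteq> v \<and> {u,v} \<notin> E) \<and> acyclic A"

text \<open>Directed path (list of distinct vertices, consecutive ones joined by arcs);
  its number of arcs is length - 1.\<close>

definition dpath :: "'a set \<Rightarrow> ('a \<times> 'a) set \<Rightarrow> 'a list \<Rightarrow> bool" where
  "dpath V A xs \<longleftrightarrow> xs \<noteq> [] \<and> set xs \<subseteq> V \<and> distinct xs \<and>
     (\<forall>i. i + 1 < length xs \<longrightarrow> (xs ! i, xs ! (i + 1)) \<in> A)"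

definition maxrank :: "'a set \<Rightarrow> ('a \<times> 'a) set \<Rightarrow> nat" where
  "maxrank V A = Max {length xs - 1 | xs. dpath V A xs}"

definition inrank :: "'a set \<Rightarrow> ('a \<times> 'a) set \<Rightarrow> 'a \<Rightarrow> nat" where
  "inrank V A v = Max {length xs - 1 | xs. dpath V A xs \<and> last xs = v}"

definition layer :: "'a set \<Rightarrow> ('a \<times> 'a) set \<Rightarrow> nat \<Rightarrow> 'a set" where
  "layer V A i = {v \<in> V. inrank V A v = i}"

definition proper_coloring ::
  "'a set \<Rightarrow> 'a set set \<Rightarrow> ('a \<times> 'a) set \<Rightarrow> nat \<Rightarrow> ('a \<Rightarrow> nat) \<Rightarrow> bool" where
  "proper_coloring V E A k c \<longleftrightarrow>
     (\<forall>v\<in>V. c v \<in> {1..k}) \<and>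
     (\<forall>e\<in>E. \<forall>u\<in>e. \<forall>v\<in>e. u \<noteq> v \<longrightarrow> c u \<noteq> c v) \<and>
     (\<forall>(u,v)\<in>A. c u < c v)"

definition chi :: "'a set \<Rightarrow> 'a set set \<Rightarrow> ('a \<times> 'a) set \<Rightarrow> nat" where
  "chi V E A = (LEAST k. \<exists>c. proper_coloring V E A k c)"

definition chi_u :: "'a set \<Rightarrow> 'a set set \<Rightarrow> nat" where
  "chi_u V E = (LEAST k. \<exists>c. (\<forall>v\<in>V. c v \<in> {1..k}) \<and>
                  (\<forall>e\<in>E. \<forall>u\<in>e. \<forall>v\<in>e. u \<noteq> v \<longrightarrow> c u \<noteq> (c v :: nat)))"

definition induced_edges :: "'a set set \<Rightarrow> 'a set \<Rightarrow> 'a set set" where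
  "induced_edges E L = {e \<in> E. e \<subseteq> L}"

end

theory Submission
  imports Defs
begin


lemma dpath_rtrancl:
  assumes "dpath V A xs" "i \<le> j" "j < length xs"
  shows "(xs!i, xs!j) \<in> A\<^sup>*"
  using assms(2,3)
proof (induction j)
  case 0 then show ?case by simp
next
  case (Suc j)
  show ?case
  proof (cases "i = Suc j")
    case True then show ?thesis by simp
  next
    case False
    then have "(xs!i, xs!j) \<in> A\<^sup>*" using Suc by simp
    moreover have "(xs!j, xs!Suc j) \<in> A" using assms(1) Suc.prems unfolding dpath_def by auto
    ultimately show ?thesis by (rule rtrancl_into_rtrancl)
  qed
qed

lemma dpath_len: "dpath V A xs \<Longrightarrow> finite V \<Longrightarrow> length xs \<le> card V"
  unfolding dpath_def by (metis card_mono distinct_card)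

lemma inrank_fin: "finite V \<Longrightarrow> finite {length xs - 1 | xs. dpath V A xs \<and> last xs = v}"
  by (rule finite_subset[of _ "{..card V}"]) (auto dest: dpath_len)

lemma maxrank_fin: "finite V \<Longrightarrow> finite {length xs - 1 | xs. dpath V A xs}"
  by (rule finite_subset[of _ "{..card V}"]) (auto dest: dpath_len)

lemma dpath_single: "v \<in> V \<Longrightarrow> dpath V A [v]"
  unfolding dpath_def by auto

lemma inrank_ex:
  assumes "finite V" "v \<in> V"
  shows "\<exists>xs. dpath V A xs \<and> last xs = v \<and> length xs - 1 = inrank V A v"
proof -
  have "{length xs - 1 | xs. dpath V A xs \<and> last xs = v} \<noteq> {}"
    using dpath_single[OF assms(2)] by force
  from Max_in[OF inrank_fin[OF assms(1)] this] show ?thesis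
    unfolding inrank_def by force
qed

lemma inrank_ge: "finite V \<Longrightarrow> dpath V A xs \<Longrightarrow> last xs = v \<Longrightarrow> length xs - 1 \<le> inrank V A v"
  unfolding inrank_def by (rule Max_ge[OF inrank_fin]) auto

lemma inrank_le_maxrank:
  assumes "finite V" "v \<in> V" shows "inrank V A v \<le> maxrank V A"
proof -
  obtain xs where "dpath V A xs" "length xs - 1 = inrank V A v" using inrank_ex[OF assms] by blast
  then show ?thesis unfolding maxrank_def by (metis (mono_tags, lifting) Max_ge maxrank_fin[OF assms(1)] mem_Collect_eq)
qed

lemma arc_inrank:
  assumes mg: "mixed_graph V E A" and uv: "(u,v) \<in> A"
  shows "inrank V A u < inrank V A v"
proof -
  have fin: "finite V" and AV: "A \<subseteq> V \<times> V" and acy: "acyclic A" using mg unfolding mixed_graph_def by auto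
  have uV: "u \<in> V" and vV: "v \<in> V" using uv AV by auto
  obtain xs where xs: "dpath V A xs" "last xs = u" "length xs - 1 = inrank V A u"
    using inrank_ex[OF fin uV] by blast
  have ne: "xs \<noteq> []" using xs unfolding dpath_def by auto
  have "v \<notin> set xs"
  proof
    assume "v \<in> set xs"
    then obtain i where i: "i < length xs" "xs!i = v" by (auto simp: in_set_conv_nth)
    have "(v, u) \<in> A\<^sup>*" using dpath_rtrancl[OF xs(1), of i "length xs - 1"] i xs(2) ne
      by (simp add: last_conv_nth)
    then have "(u,u) \<in> A\<^sup>+" using uv by (rule rtrancl_into_trancl2[rotated])
    then show False using acy unfolding acyclic_def by blast
  qed
  have "dpath V A (xs @ [v])"
    using xs(1) \<open>v \<notin> set xs\<close> vV uv xs(2) ne unfolding dpath_def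
    apply (auto simp: nth_append)
    by (metis Suc_lessI diff_Suc_1 last_conv_nth less_diff_conv)
  from inrank_ge[OF fin this] have "length xs \<le> inrank V A v" by simp
  then show ?thesis using xs(3) ne by (cases xs) auto
qed

lemma chi_u_attained:
  assumes "finite L" "\<forall>e\<in>F. e \<subseteq> L"
  shows "\<exists>c. (\<forall>v\<in>L. c v \<in> {1..chi_u L F}) \<and>
                  (\<forall>e\<in>F. \<forall>u\<in>e. \<forall>v\<in>e. u \<noteq> v \<longrightarrow> c u \<noteq> (c v :: nat))"
proof -
  obtain h where h: "bij_betw h L {0..<card L}" using ex_bij_betw_finite_nat[OF assms(1)] by blast
  have H: "(\<forall>v\<in>L. (\<lambda>v. h v + 1) v \<in> {1..card L}) \<and>
                  (\<forall>e\<in>F. \<forall>u\<in>e. \<forall>v\<in>e. u \<noteq> v \<longrightarrow> (\<lambda>v. h v + 1) u \<noteq> ((\<lambda>v. h v + 1) v :: nat))"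
  proof (intro conjI ballI impI)
    fix v assume "v \<in> L" then show "h v + 1 \<in> {1..card L}" using bij_betw_apply[OF h] by fastforce
  next
    fix e u v assume "e \<in> F" "u \<in> e" "v \<in> e" "u \<noteq> v"
    then have "u \<in> L" "v \<in> L" using assms(2) by auto
    then show "h u + 1 \<noteq> h v + 1" using h \<open>u \<noteq> v\<close> unfolding bij_betw_def inj_on_def by auto
  qed
  have "\<exists>k c. (\<forall>v\<in>L. c v \<in> {1..k}) \<and>
                  (\<forall>e\<in>F. \<forall>u\<in>e. \<forall>v\<in>e. u \<noteq> v \<longrightarrow> c u \<noteq> (c v :: nat))" by (rule exI[where x="card L"], rule exI[where x="\<lambda>v. h v + 1"], rule H)
  then show ?thesis unfolding chi_u_def by (rule LeastI2_ex) assumption+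
qed

theorem part1:
  assumes mg: "mixed_graph V E A"
  shows "chi V E A \<le>
           (\<Sum>i = 0..maxrank V A. chi_u (layer V A i) (induced_edges E (layer V A i)))"
proof -
  have fin: "finite V" and EV: "\<forall>e\<in>E. e \<subseteq> V" and AV: "A \<subseteq> V \<times> V" using mg unfolding mixed_graph_def by auto
  define K where "K i = chi_u (layer V A i) (induced_edges E (layer V A i))" for i
  define P where "P i c \<longleftrightarrow> (\<forall>v\<in>layer V A i. c v \<in> {1..K i}) \<and>
                  (\<forall>e\<in>induced_edges E (layer V A i). \<forall>u\<in>e. \<forall>v\<in>e. u \<noteq> v \<longrightarrow> c u \<noteq> (c v :: nat))" for i c
  have "\<exists>c. P i c" for i unfolding P_def K_def
    by (rule chi_u_attained) (auto simp: layer_def induced_edges_def fin)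
  define C where "C i = (SOME c. P i c)" for i
  have C: "P i (C i)" for i unfolding C_def using \<open>\<exists>c. P i c\<close> by (rule someI_ex)
  define S where "S i = (\<Sum>j<i. K j)" for i
  have Smono: "i \<le> j \<Longrightarrow> S i \<le> S j" for i j unfolding S_def by (rule sum_mono2) auto
  have SSuc: "S (Suc i) = S i + K i" for i unfolding S_def by simp
  define col where "col v = S (inrank V A v) + C (inrank V A v) v" for v
  have lay: "v \<in> V \<Longrightarrow> v \<in> layer V A (inrank V A v)" for v unfolding layer_def by simp
  have colr: "v \<in> V \<Longrightarrow> S (inrank V A v) < col v \<and> col v \<le> S (Suc (inrank V A v))" for v
    using C[of "inrank V A v"] lay[of v] unfolding col_def P_def SSuc by auto
  have lt: "u \<in> V \<Longrightarrow> v \<in> V \<Longrightarrow> inrank V A u < inrank V A v \<Longrightarrow> col u < col v" for u v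
    using colr[of u] colr[of v] Smono[of "Suc (inrank V A u)" "inrank V A v"] by linarith
  have tot: "S (Suc (maxrank V A)) = (\<Sum>i = 0..maxrank V A. K i)"
    unfolding S_def by (simp add: atLeast0AtMost lessThan_Suc_atMost)
  have "proper_coloring V E A (S (Suc (maxrank V A))) col"
    unfolding proper_coloring_def
  proof (intro conjI ballI impI)
    fix v assume "v \<in> V"
    then show "col v \<in> {1..S (Suc (maxrank V A))}"
      using colr[of v] Smono[of "Suc (inrank V A v)" "Suc (maxrank V A)"] inrank_le_maxrank[OF fin, of v A]
      by auto
  next
    fix e u v assume e: "e \<in> E" "u \<in> e" "v \<in> e" "u \<noteq> v"
    have uv: "u \<in> V" "v \<in> V" using e EV by auto
    consider "inrank V A u < inrank V A v" | "inrank V A v < inrank V A u" | "inrank V A u = inrank V A v" by linarith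
    then show "col u \<noteq> col v"
    proof cases
      case 1 then show ?thesis using lt uv by fastforce
    next
      case 2 then show ?thesis using lt uv by fastforce
    next
      case 3
      let ?r = "inrank V A u"
      have "e \<in> induced_edges E (layer V A ?r)"
      proof -
        have "card e = 2" using mg e unfolding mixed_graph_def by auto
        then obtain x y where "e = {x,y}" "x \<noteq> y" by (auto simp: card_2_iff)
        then have "e = {u,v}" using e(2-4) by blast
        then have "e \<subseteq> layer V A ?r" unfolding layer_def using uv 3 by auto
        then show ?thesis unfolding induced_edges_def using e(1) by blast
      qed
      then show ?thesis using C[of ?r] e 3 unfolding P_def col_def by auto
    qed
  next
    fix x assume "x \<in> A"
    then obtain u v where x: "x = (u,v)" "(u,v) \<in> A" by (cases x) auto
    then show "case x of (u, v) \<Rightarrow> col u < col v"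
      using lt arc_inrank[OF mg x(2)] AV by auto
  qed
  then have "chi V E A \<le> S (Suc (maxrank V A))" unfolding chi_def by (intro Least_le) blast
  then show ?thesis using tot K_def by simp
qed


lemma pigeon_ge:
  fixes S :: "nat set"
  assumes "finite S" "card S = k" "k \<ge> 1" "\<forall>x\<in>S. x \<ge> m"
  shows "\<exists>x\<in>S. x \<ge> m + k - 1"
proof (rule ccontr)
  assume "\<not> ?thesis"
  then have "S \<subseteq> {m..<m+k-1}" using assms(4) by auto
  then have "card S \<le> k - 1" using card_mono[of "{m..<m+k-1}" S] by simp
  then show False using assms by simp
qed

locale cons =
  fixes l k :: nat
  assumes l1: "l \<ge> 1" and k1: "k \<ge> 1"
begin

definition "VV = {..<(l+1)*k}"
definition "EE = {{u,v} | u v. u \<in> VV \<and> v \<in> VV \<and> u \<noteq> v \<and> u div k = v div k}"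
definition "AA = {(u,v). u \<in> VV \<and> v \<in> VV \<and> v div k = Suc (u div k)}"

lemma VV_div: "v \<in> VV \<Longrightarrow> v div k \<le> l"
  unfolding VV_def using k1
  by (metis less_Suc_eq_le less_mult_imp_div_less lessThan_iff Suc_eq_plus1)

lemma trancl_AA: "(x,y) \<in> AA\<^sup>+ \<Longrightarrow> x div k < y div k"
  by (induction rule: trancl_induct) (auto simp: AA_def)

lemma mg: "mixed_graph VV EE AA"
  unfolding mixed_graph_def
proof (intro conjI)
  show "finite VV" unfolding VV_def by simp
  show "\<forall>e\<in>EE. e \<subseteq> VV \<and> card e = 2" unfolding EE_def by auto
  show "AA \<subseteq> VV \<times> VV" unfolding AA_def by auto
  show "\<forall>(u, v)\<in>AA. u \<noteq> v \<and> {u, v} \<notin> EE"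
    unfolding AA_def EE_def by (auto simp: doubleton_eq_iff)
  show "acyclic AA" unfolding acyclic_def using trancl_AA by blast
qed

lemma dpath_div:
  assumes "dpath VV AA xs" "i < length xs"
  shows "xs!i div k = xs!0 div k + i"
  using assms(2)
proof (induction i)
  case 0 then show ?case by simp
next
  case (Suc i)
  then have "(xs!i, xs!Suc i) \<in> AA" using assms(1) unfolding dpath_def by auto
  then show ?case using Suc by (auto simp: AA_def)
qed

lemma dpath_bound:
  assumes "dpath VV AA xs" shows "length xs - 1 \<le> last xs div k"
proof -
  have ne: "xs \<noteq> []" using assms unfolding dpath_def by auto
  then show ?thesis using dpath_div[OF assms, of "length xs - 1"] by (simp add: last_conv_nth)
qed

lemma dpath_last_V: "dpath VV AA xs \<Longrightarrow> last xs \<in> VV"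
  unfolding dpath_def by auto

definition "wit v = map (\<lambda>i. i*k + v mod k) [0..<Suc (v div k)]"

lemma wit: assumes "v \<in> VV" shows "dpath VV AA (wit v)" "last (wit v) = v" "length (wit v) - 1 = v div k"
proof -
  have m: "v mod k < k" using k1 by simp
  have le: "i \<le> v div k \<Longrightarrow> i*k + v mod k \<le> v" for i
    by (metis add_le_cancel_right div_mult_mod_eq mult_le_mono1)
  have dv: "(i*k + v mod k) div k = i" for i using m k1 by simp
  show "last (wit v) = v" unfolding wit_def by (simp add: last_map)
  show "length (wit v) - 1 = v div k" unfolding wit_def by simp
  show "dpath VV AA (wit v)" unfolding dpath_def
  proof (intro conjI allI impI)
    show "wit v \<noteq> []" unfolding wit_def by simp
    show "set (wit v) \<subseteq> VV"
    proof
      fix x assume "x \<in> set (wit v)"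
      then obtain i where "i < Suc (v div k)" "x = i*k + v mod k" unfolding wit_def set_map set_upt by auto
      then have "i \<le> v div k" "x = i*k + v mod k" by auto
      then show "x \<in> VV" using le[OF \<open>i \<le> v div k\<close>] assms unfolding VV_def by fastforce
    qed
    show "distinct (wit v)" unfolding wit_def using k1 by (simp del: upt_Suc add: distinct_map inj_on_def)
    fix i assume "i + 1 < length (wit v)"
    then have i: "i + 1 \<le> v div k" unfolding wit_def by simp
    have n: "wit v ! i = i*k + v mod k" "wit v ! (i+1) = (i+1)*k + v mod k"
      unfolding wit_def using i by (simp_all del: upt_Suc add: nth_map_upt)
    have b1: "i*k + v mod k \<le> v" using le[of i] i by simp
    have b2: "(i+1)*k + v mod k \<le> v" using le[of "i+1"] i by blast
    have d1: "(i*k + v mod k) div k = i" using dv[of i] .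
    have d2: "((i+1)*k + v mod k) div k = Suc i" using dv[of "i+1"] by simp
    have vb: "v < (l+1)*k" using assms unfolding VV_def by simp
    have "(i*k + v mod k, (i+1)*k + v mod k) \<in> AA"
      unfolding AA_def VV_def using b1 b2 vb d1 d2 by (simp only: mem_Collect_eq case_prod_conv lessThan_iff) linarith
    then show "(wit v ! i, wit v ! (i + 1)) \<in> AA" unfolding n .
  qed
qed

lemma finV: "finite VV" unfolding VV_def by simp

lemma inrank_VV: assumes "v \<in> VV" shows "inrank VV AA v = v div k"
  unfolding inrank_def
proof (rule Max_eqI)
  show "finite {length xs - 1 |xs. dpath VV AA xs \<and> last xs = v}" by (rule inrank_fin[OF finV])
  show "y \<le> v div k" if yy: "y \<in> {length xs - 1 |xs. dpath VV AA xs \<and> last xs = v}" for y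
  proof -
    obtain xs where "y = length xs - 1" "dpath VV AA xs" "last xs = v" using yy by blast
    then show ?thesis using dpath_bound[of xs] by simp
  qed
  have "dpath VV AA (wit v) \<and> last (wit v) = v \<and> v div k = length (wit v) - 1"
    using wit[OF assms] by simp
  then show "v div k \<in> {length xs - 1 |xs. dpath VV AA xs \<and> last xs = v}" by blast
qed

lemma lk_V: "l*k \<in> VV" unfolding VV_def using k1 by simp

lemma maxrank_VV: "maxrank VV AA = l"
  unfolding maxrank_def
proof (rule Max_eqI)
  show "finite {length xs - 1 |xs. dpath VV AA xs}" by (rule maxrank_fin[OF finV])
  show "y \<le> l" if yy: "y \<in> {length xs - 1 |xs. dpath VV AA xs}" for y
  proof -
    obtain xs where "y = length xs - 1" "dpath VV AA xs" using yy by blast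
    then show ?thesis using dpath_bound[of xs] VV_div[OF dpath_last_V[of xs]] by linarith
  qed
  have "(l*k) div k = l" using k1 by simp
  then have "dpath VV AA (wit (l*k)) \<and> l = length (wit (l*k)) - 1"
    using wit[OF lk_V] by simp
  then show "l \<in> {length xs - 1 |xs. dpath VV AA xs}" by blast
qed

lemma layer_VV: "layer VV AA i = {v \<in> VV. v div k = i}"
  unfolding layer_def using inrank_VV by auto

lemma layer_eq: assumes "i \<le> l" shows "{v \<in> VV. v div k = i} = {i*k..<i*k+k}"
proof -
  have bd: "(i*k+k) \<le> (l+1)*k" using assms by (simp add: add_mult_distrib2 mult.commute)
  have eq: "v div k = i \<longleftrightarrow> i*k \<le> v \<and> v < i*k+k" for v
  proof
    assume h: "v div k = i"
    have "v = (v div k)*k + v mod k" by simp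
    then have "v = i*k + v mod k" using h by simp
    moreover have "v mod k < k" using k1 by simp
    ultimately show "i*k \<le> v \<and> v < i*k+k" by linarith
  next
    assume "i*k \<le> v \<and> v < i*k+k"
    then show "v div k = i" by (intro div_nat_eqI) (auto simp: mult.commute)
  qed
  show ?thesis
  proof (rule set_eqI)
    fix v
    have "v \<in> {v \<in> VV. v div k = i} \<longleftrightarrow> v < (l+1)*k \<and> i*k \<le> v \<and> v < i*k+k"
      using eq[of v] by (simp add: VV_def)
    also have "\<dots> \<longleftrightarrow> v \<in> {i*k..<i*k+k}"
    proof -
      have "v < i*k+k \<Longrightarrow> v < (l+1)*k" using bd by linarith
      then show ?thesis by auto
    qed
    finally show "v \<in> {v \<in> VV. v div k = i} \<longleftrightarrow> v \<in> {i*k..<i*k+k}" .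
  qed
qed

lemma layer_i: "i \<le> l \<Longrightarrow> layer VV AA i = {i*k..<i*k+k}"
  using layer_VV layer_eq by simp

lemma layer_sub: "i \<le> l \<Longrightarrow> u \<in> layer VV AA i \<Longrightarrow> u \<in> VV \<and> u div k = i"
  using layer_VV by auto

lemma edge_in: assumes "i \<le> l" "u \<in> layer VV AA i" "v \<in> layer VV AA i" "u \<noteq> v"
  shows "{u,v} \<in> induced_edges EE (layer VV AA i)"
proof -
  have "u \<in> VV" "v \<in> VV" "u div k = v div k" using layer_sub[OF assms(1,2)] layer_sub[OF assms(1,3)] by auto
  then have "{u,v} \<in> EE" unfolding EE_def using assms(4) by blast
  then show ?thesis unfolding induced_edges_def using assms(2,3) by simp
qed

lemma card_layer: "i \<le> l \<Longrightarrow> card (layer VV AA i) = k"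
  using layer_i by simp

lemma chi_u_VV: assumes "i \<le> l"
  shows "chi_u (layer VV AA i) (induced_edges EE (layer VV AA i)) = k"
  unfolding chi_u_def
proof (rule Least_equality)
  show "\<exists>c. (\<forall>v\<in>layer VV AA i. c v \<in> {1..k}) \<and>
        (\<forall>e\<in>induced_edges EE (layer VV AA i). \<forall>u\<in>e. \<forall>v\<in>e. u \<noteq> v \<longrightarrow> c u \<noteq> (c v :: nat))"
  proof (intro exI[of _ "\<lambda>v. v mod k + 1"] conjI ballI impI)
    fix v assume "v \<in> layer VV AA i" have "v mod k < k" using k1 by simp
    then show "v mod k + 1 \<in> {1..k}" by simp
  next
    fix e u v assume "e \<in> induced_edges EE (layer VV AA i)" "u \<in> e" "v \<in> e" "u \<noteq> v"
    then have "u \<in> layer VV AA i" "v \<in> layer VV AA i" unfolding induced_edges_def by auto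
    then have "u div k = v div k" using layer_sub[OF assms] by simp
    show "u mod k + 1 \<noteq> v mod k + 1"
    proof
      assume "u mod k + 1 = v mod k + 1"
      then have "u mod k = v mod k" by simp
      moreover have "u = (u div k)*k + u mod k" "v = (v div k)*k + v mod k" by simp_all
      ultimately have "u = v" using \<open>u div k = v div k\<close> by metis
      then show False using \<open>u \<noteq> v\<close> by simp
    qed
  qed
next
  fix y assume "\<exists>c. (\<forall>v\<in>layer VV AA i. c v \<in> {1..y}) \<and>
        (\<forall>e\<in>induced_edges EE (layer VV AA i). \<forall>u\<in>e. \<forall>v\<in>e. u \<noteq> v \<longrightarrow> c u \<noteq> (c v :: nat))"
  then obtain c where c: "\<forall>v\<in>layer VV AA i. c v \<in> {1..y}"
    "\<forall>e\<in>induced_edges EE (layer VV AA i). \<forall>u\<in>e. \<forall>v\<in>e. u \<noteq> v \<longrightarrow> c u \<noteq> (c v :: nat)" by blast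
  have "inj_on c (layer VV AA i)"
  proof (rule inj_onI, rule ccontr)
    fix u v assume "u \<in> layer VV AA i" "v \<in> layer VV AA i" "c u = c v" "u \<noteq> v"
    then have "{u,v} \<in> induced_edges EE (layer VV AA i)" using edge_in[OF assms] by blast
    then have "\<forall>u'\<in>{u,v}. \<forall>v'\<in>{u,v}. u' \<noteq> v' \<longrightarrow> c u' \<noteq> c v'" using c(2) by (rule bspec[rotated])
    then show False using \<open>c u = c v\<close> \<open>u \<noteq> v\<close> by simp
  qed
  then have "card (layer VV AA i) \<le> card {1..y}"
    using c(1) by (intro card_inj_on_le) auto
  then show "k \<le> y" using card_layer[OF assms] by simp
qed

lemma chi_lower: assumes "proper_coloring VV EE AA y c" shows "(l+1)*k \<le> y"
proof -
  have c1: "\<forall>v\<in>VV. c v \<in> {1..y}" and c2: "\<forall>e\<in>EE. \<forall>u\<in>e. \<forall>v\<in>e. u \<noteq> v \<longrightarrow> c u \<noteq> c v"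
    and c3: "\<forall>(u,v)\<in>AA. c u < c v" using assms unfolding proper_coloring_def by auto
  have top: "\<exists>w\<in>layer VV AA i. c w \<ge> m + k - 1"
    if i: "i \<le> l" and m: "\<forall>v\<in>layer VV AA i. c v \<ge> m" for i m
  proof -
    have "inj_on c (layer VV AA i)"
    proof (rule inj_onI, rule ccontr)
      fix u v assume uv: "u \<in> layer VV AA i" "v \<in> layer VV AA i" "c u = c v" "u \<noteq> v"
      have "{u,v} \<in> EE" using edge_in[OF i uv(1,2,4)] unfolding induced_edges_def by blast
      then have "\<forall>u'\<in>{u,v}. \<forall>v'\<in>{u,v}. u' \<noteq> v' \<longrightarrow> c u' \<noteq> c v'" using c2 by (rule bspec[rotated])
      then show False using uv by simp
    qed
    then have "card (c ` layer VV AA i) = k" using card_layer[OF i] card_image by metis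
    moreover have "finite (c ` layer VV AA i)" using layer_i[OF i] by simp
    moreover have "\<forall>x\<in>c ` layer VV AA i. m \<le> x" using m by blast
    ultimately obtain x where "x \<in> c ` layer VV AA i" "x \<ge> m + k - 1" using pigeon_ge k1 by metis
    then show ?thesis by blast
  qed
  have low: "\<forall>v\<in>layer VV AA i. c v \<ge> i*k + 1" if "i \<le> l" for i
    using that
  proof (induction i)
    case 0 then show ?case using c1 layer_sub by fastforce
  next
    case (Suc i)
    then obtain w where w: "w \<in> layer VV AA i" "c w \<ge> i*k + 1 + k - 1" using top[of i "i*k+1"] by auto
    show ?case
    proof
      fix v assume v: "v \<in> layer VV AA (Suc i)"
      have "(w,v) \<in> AA" using layer_sub[OF _ w(1)] layer_sub[OF Suc.prems v] Suc.prems unfolding AA_def by auto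
      then have "c w < c v" using c3 by blast
      then show "c v \<ge> Suc i * k + 1" using w(2) by simp
    qed
  qed
  obtain w where w: "w \<in> layer VV AA l" "c w \<ge> l*k + 1 + k - 1" using top[of l "l*k+1"] low[of l] by auto
  have "c w \<le> y" using c1 layer_sub[OF _ w(1)] by auto
  then show ?thesis using w(2) by simp
qed

lemma chi_VV: "chi VV EE AA = (l+1)*k"
  unfolding chi_def
proof (rule Least_equality)
  show "\<exists>c. proper_coloring VV EE AA ((l + 1) * k) c"
  proof (intro exI[of _ "\<lambda>v. v + 1"])
    show "proper_coloring VV EE AA ((l + 1) * k) (\<lambda>v. v + 1)"
      unfolding proper_coloring_def
    proof (intro conjI ballI)
      fix v assume "v \<in> VV" then show "v + 1 \<in> {1..(l + 1) * k}" unfolding VV_def by simp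
    next
      fix e u v assume "e \<in> EE" "u \<in> e" "v \<in> e" then show "u \<noteq> v \<longrightarrow> u + 1 \<noteq> v + 1" by simp
    next
      fix x assume "x \<in> AA"
      then obtain u v where x: "x = (u,v)" "v div k = Suc (u div k)" unfolding AA_def by auto
      have "u < v"
      proof (rule ccontr)
        assume "\<not> u < v" then have "v div k \<le> u div k" by (simp add: div_le_mono)
        then show False using x by simp
      qed
      then show "case x of (u, v) \<Rightarrow> u + 1 < v + 1" using x by simp
    qed
  qed
next
  fix y assume "\<exists>c. proper_coloring VV EE AA y c"
  then show "(l+1)*k \<le> y" using chi_lower by blast
qed

end

theorem mainTheorem9:
  fixes V :: "'a set" and E :: "'a set set" and A :: "('a \<times> 'a) set"
  assumes "mixed_graph V E A"
  shows "chi V E A \<le>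
           (\<Sum>i = 0..maxrank V A. chi_u (layer V A i) (induced_edges E (layer V A i))) \<and>
         (\<forall>l k :: nat. l \<ge> 1 \<and> k \<ge> 1 \<longrightarrow>
           (\<exists>(V' :: nat set) E' A'. mixed_graph V' E' A' \<and> maxrank V' A' = l \<and>
              (\<forall>i \<in> {0..l}. chi_u (layer V' A' i) (induced_edges E' (layer V' A' i)) = k) \<and>
              chi V' E' A' = (l + 1) * k))"
proof (intro conjI allI impI)
  show "chi V E A \<le>
           (\<Sum>i = 0..maxrank V A. chi_u (layer V A i) (induced_edges E (layer V A i)))"
    using part1[OF assms] .
next
  fix l k :: nat assume lk: "l \<ge> 1 \<and> k \<ge> 1"
  interpret cons l k using lk by unfold_locales auto
  show "\<exists>(V' :: nat set) E' A'. mixed_graph V' E' A' \<and> maxrank V' A' = l \<and>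
              (\<forall>i \<in> {0..l}. chi_u (layer V' A' i) (induced_edges E' (layer V' A' i)) = k) \<and>
              chi V' E' A' = (l + 1) * k"
  proof (intro exI conjI ballI)
    show "mixed_graph VV EE AA" by (rule mg)
    show "maxrank VV AA = l" by (rule maxrank_VV)
    show "chi VV EE AA = (l + 1) * k" by (rule chi_VV)
    fix i assume "i \<in> {0..l}"
    then show "chi_u (layer VV AA i) (induced_edges EE (layer VV AA i)) = k" using chi_u_VV by simp
  qed
qed

end
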